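(* Let $n\in\mathbb N$, $\tau\in\mathbb R$ with $t_n(\tau)>0$, and $u,v\in\mathbb R$. (1) The function $\mathbb R\ni\alpha\mapsto\mathrm{Re}\,\phi_{n,\tau}(\alpha+iy_{t_n(\tau),\mu_n}(\alpha),u)$ attains its unique local minimum at $\alpha=\mathrm{Re}\,w$, where $w=F_{t_n(\tau),\mu_n}\left(x_n(\tau)+\frac{u}{c_2n^{2/3}}\right)$; it is strictly decreasing for $\alpha<\mathrm{Re}\,w$ and strictly increasing for $\alpha>\mathrm{Re}\,w$. (2) For any $\alpha\in\mathbb R$, the function $[0,\infty)\ni\beta\mapsto\mathrm{Re}\,\phi_{n,\tau}(\alpha+i\beta,v)$ attains its unique local maximum at $\beta=y_{t_n(\tau),\mu_n}(\alpha)$, is strictly increasing for $0<\beta<y_{t_n(\tau),\mu_n}(\alpha)$ and strictly decreasing for $\beta>y_{t_n(\tau),\mu_n}(\alpha)$.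
   Context: $\mu_n=\frac1n\sum_j\delta_{x_j^{(n)}}$ is a discrete probability measure; $g_{\mu_n}(z)=\int\log(z-s)d\mu_n(s)$ (principal branch, so $\mathrm{Re}\,g_{\mu_n}(z)=\int\log|z-s|d\mu_n(s)$); $G_{\mu_n}(z)=\int\frac{d\mu_n(s)}{z-s}$. Constants $t_{\rm cr}>0$, $c_2>0$, $G_0\in\mathbb R$, $x^*\in\mathbb R$ are fixed; $t_n(\tau)=t_{\rm cr}+\frac{2\tau}{c_2^2n^{1/3}}$, $x_n(\tau)=x^*+t_n(\tau)G_0$. Phase function: $\phi_{n,\tau}(z,v)=\frac{n}{2t_n(\tau)}\left(z-x_n(\tau)-\frac{v}{c_2n^{2/3}}\right)^2+ng_{\mu_n}(z)$. For $t>0$: $y_{t,\mu_n}(x)=\inf\{y>0:\int\frac{d\mu_n(s)}{(x-s)^2+y^2}\le\frac1t\}$, $H_{t,\mu_n}(z)=z+tG_{\mu_n}(z)$, which maps the curve $\{x+iy_{t,\mu_n}(x):x\in\mathbb R\}$ bijectively onto $\mathbb R$; $F_{t,\mu_n}$ is its inverse. *)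

theory Defs
  imports "HOL-Analysis.Analysis" "HOL-Library.Extended_Real"
begin

text \<open>The discrete measure mu_n = (1/n) sum_{j<n} delta_{x j}; its atoms are x 0, ..., x (n-1).\<close>

definition Gmu :: "nat \<Rightarrow> (nat \<Rightarrow> real) \<Rightarrow> complex \<Rightarrow> complex" where
  "Gmu n x z = (\<Sum>j<n. 1 / (z - complex_of_real (x j))) / of_nat n"

definition gmu :: "nat \<Rightarrow> (nat \<Rightarrow> real) \<Rightarrow> complex \<Rightarrow> complex" where
  "gmu n x z = (\<Sum>j<n. Ln (z - complex_of_real (x j))) / of_nat n"

definition ymu :: "nat \<Rightarrow> (nat \<Rightarrow> real) \<Rightarrow> real \<Rightarrow> real \<Rightarrow> real" where
  "ymu n x t a = Inf {y. y > 0 \<and> (\<Sum>j<n. 1 / ((a - x j)^2 + y^2)) / real n \<le> 1 / t}"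

definition Hmu :: "nat \<Rightarrow> (nat \<Rightarrow> real) \<Rightarrow> real \<Rightarrow> complex \<Rightarrow> complex" where
  "Hmu n x t z = z + complex_of_real t * Gmu n x z"

definition ycurve :: "nat \<Rightarrow> (nat \<Rightarrow> real) \<Rightarrow> real \<Rightarrow> complex set" where
  "ycurve n x t = {Complex a (ymu n x t a) | a. True}"

definition Fmu :: "nat \<Rightarrow> (nat \<Rightarrow> real) \<Rightarrow> real \<Rightarrow> real \<Rightarrow> complex" where
  "Fmu n x t u = (THE z. z \<in> ycurve n x t \<and> Hmu n x t z = complex_of_real u)"

definition tn :: "real \<Rightarrow> real \<Rightarrow> nat \<Rightarrow> real \<Rightarrow> real" where
  "tn tcr c2 n \<tau> = tcr + 2 * \<tau> / (c2^2 * real n powr (1/3))"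

definition xn :: "real \<Rightarrow> real \<Rightarrow> real \<Rightarrow> real \<Rightarrow> nat \<Rightarrow> real \<Rightarrow> real" where
  "xn xstar G0 tcr c2 n \<tau> = xstar + tn tcr c2 n \<tau> * G0"

definition phi :: "nat \<Rightarrow> (nat \<Rightarrow> real) \<Rightarrow> real \<Rightarrow> real \<Rightarrow> real \<Rightarrow> real \<Rightarrow> real
                   \<Rightarrow> complex \<Rightarrow> real \<Rightarrow> complex" where
  "phi n x tcr c2 G0 xstar \<tau> z v =
     of_real (real n / (2 * tn tcr c2 n \<tau>)) *
       (z - of_real (xn xstar G0 tcr c2 n \<tau>) - of_real (v / (c2 * real n powr (2/3))))^2
     + of_nat n * gmu n x z"

text \<open>Re phi, as an extended real: equal to -infinity at the atoms of mu_n
  (where log|z - s| = -infinity), and Re (phi ...) elsewhere.\<close>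
definition RePhi :: "nat \<Rightarrow> (nat \<Rightarrow> real) \<Rightarrow> real \<Rightarrow> real \<Rightarrow> real \<Rightarrow> real \<Rightarrow> real
                   \<Rightarrow> complex \<Rightarrow> real \<Rightarrow> ereal" where
  "RePhi n x tcr c2 G0 xstar \<tau> z v =
     (if \<exists>j<n. z = complex_of_real (x j) then -\<infinity>
      else ereal (Re (phi n x tcr c2 G0 xstar \<tau> z v)))"

definition is_local_min_on :: "real set \<Rightarrow> (real \<Rightarrow> 'b::linorder) \<Rightarrow> real \<Rightarrow> bool" where
  "is_local_min_on S f a \<longleftrightarrow> a \<in> S \<and> (\<exists>e>0. \<forall>b\<in>S. \<bar>b - a\<bar> < e \<longrightarrow> f a \<le> f b)"

definition is_local_max_on :: "real set \<Rightarrow> (real \<Rightarrow> 'b::linorder) \<Rightarrow> real \<Rightarrow> bool" where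
  "is_local_max_on S f a \<longleftrightarrow> a \<in> S \<and> (\<exists>e>0. \<forall>b\<in>S. \<bar>b - a\<bar> < e \<longrightarrow> f b \<le> f a)"

end

theory Submission
  imports Defs "HOL-Computational_Algebra.Polynomial"
begin


lemma RePhi_eq:
  "RePhi n x tcr c2 G0 xstar \<tau> (Complex a b) v =
   (if b = 0 \<and> (\<exists>j<n. a = x j) then -\<infinity>
    else ereal (real n / (2 * tn tcr c2 n \<tau>) *
       ((a - (xn xstar G0 tcr c2 n \<tau> + v / (c2 * real n powr (2/3))))^2 - b^2)
       + (\<Sum>j<n. ln ((a - x j)^2 + b^2)) / 2))"
proof (cases "b = 0 \<and> (\<exists>j<n. a = x j)")
  case True
  then show ?thesis unfolding RePhi_def by (auto simp: complex_eq_iff)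
next
  case False
  have ne: "\<not> (\<exists>j<n. Complex a b = complex_of_real (x j))"
    using False by (auto simp: complex_eq_iff)
  have pos: "\<And>j. j < n \<Longrightarrow> (a - x j)^2 + b^2 > 0"
    using False by (auto simp: sum_power2_gt_zero_iff)
  have nz: "\<And>j. j < n \<Longrightarrow> Complex a b - complex_of_real (x j) \<noteq> 0"
    using ne by auto
  have g: "Re (of_nat n * gmu n x (Complex a b)) = (\<Sum>j<n. ln ((a - x j)^2 + b^2)) / 2"
  proof (cases "n = 0")
    case True then show ?thesis by simp
  next
    case False
    have "of_nat n * gmu n x (Complex a b) = (\<Sum>j<n. Ln (Complex a b - complex_of_real (x j)))"
      using False unfolding gmu_def by simp
    then have "Re (of_nat n * gmu n x (Complex a b)) = (\<Sum>j<n. Re (Ln (Complex a b - complex_of_real (x j))))"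
      by (simp add: Re_sum)
    also have "\<dots> = (\<Sum>j<n. ln ((a - x j)^2 + b^2) / 2)"
    proof (rule sum.cong[OF refl])
      fix j assume "j \<in> {..<n}"
      then have j: "j < n" by simp
      have "Complex a b - complex_of_real (x j) = Complex (a - x j) b" by (simp add: complex_eq_iff)
      then show "Re (Ln (Complex a b - complex_of_real (x j))) = ln ((a - x j)^2 + b^2) / 2"
        using nz[OF j] pos[OF j] by (simp add: complex_norm ln_sqrt)
    qed
    finally show ?thesis by (simp add: sum_divide_distrib)
  qed
  have q: "Complex a b - complex_of_real (xn xstar G0 tcr c2 n \<tau>) - complex_of_real (v / (c2 * real n powr (2/3)))
     = Complex (a - (xn xstar G0 tcr c2 n \<tau> + v / (c2 * real n powr (2/3)))) b"
    by (simp add: complex_eq_iff)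
  have r: "\<And>p q. Re ((Complex p q)^2) = p^2 - q^2" by (simp add: power2_eq_square)
  show ?thesis using False unfolding RePhi_def phi_def
    apply (simp only: ne if_False q)
    using g by (simp add: r add_divide_distrib diff_divide_distrib)
qed



lemma mvt_any:
  fixes f f' :: "real \<Rightarrow> real"
  assumes "\<And>s. min u v \<le> s \<Longrightarrow> s \<le> max u v \<Longrightarrow> (f has_real_derivative f' s) (at s)"
  shows "\<exists>\<xi>. min u v \<le> \<xi> \<and> \<xi> \<le> max u v \<and> f u - f v = (u - v) * f' \<xi>"
proof -
  consider "u < v" | "u = v" | "v < u" by linarith
  then show ?thesis
  proof cases
    case 1
    then obtain z where "u < z" "z < v" "f v - f u = (v - u) * f' z"
      using MVT2[of u v f f'] assms by (auto simp: min_def max_def)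
    then show ?thesis using 1 by (intro exI[of _ z]) (auto simp: algebra_simps)
  next
    case 2 then show ?thesis by auto
  next
    case 3
    then obtain z where "v < z" "z < u" "f u - f v = (u - v) * f' z"
      using MVT2[of v u f f'] assms by (auto simp: min_def max_def)
    then show ?thesis using 3 by (intro exI[of _ z]) (auto simp: algebra_simps)
  qed
qed

lemma hadamard:
  fixes \<Phi> \<phi> :: "real \<Rightarrow> real \<Rightarrow> real" and u v w :: "'x \<Rightarrow> real"
  assumes cont: "isCont (\<lambda>p. \<phi> (fst p) (snd p)) (a0, b0)"
    and der: "\<exists>d>0. \<forall>s b. \<bar>s - a0\<bar> < d \<and> \<bar>b - b0\<bar> < d \<longrightarrow> ((\<lambda>s. \<Phi> s b) has_real_derivative \<phi> s b) (at s)"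
    and u: "(u \<longlongrightarrow> a0) F" and v: "(v \<longlongrightarrow> a0) F" and w: "(w \<longlongrightarrow> b0) F"
  shows "\<exists>M. (M \<longlongrightarrow> \<phi> a0 b0) F \<and> eventually (\<lambda>i. \<Phi> (u i) (w i) - \<Phi> (v i) (w i) = (u i - v i) * M i) F"
proof -
  obtain d where d: "d > 0" "\<And>s b. \<bar>s - a0\<bar> < d \<Longrightarrow> \<bar>b - b0\<bar> < d \<Longrightarrow> ((\<lambda>s. \<Phi> s b) has_real_derivative \<phi> s b) (at s)"
    using der by blast
  have ev: "eventually (\<lambda>i. \<bar>u i - a0\<bar> < d \<and> \<bar>v i - a0\<bar> < d \<and> \<bar>w i - b0\<bar> < d) F"
    using tendstoD[OF u d(1)] tendstoD[OF v d(1)] tendstoD[OF w d(1)]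
    by eventually_elim (auto simp: dist_real_def)
  define P where "P i \<xi> \<longleftrightarrow> min (u i) (v i) \<le> \<xi> \<and> \<xi> \<le> max (u i) (v i) \<and>
      \<Phi> (u i) (w i) - \<Phi> (v i) (w i) = (u i - v i) * \<phi> \<xi> (w i)" for i \<xi>
  define \<xi> where "\<xi> i = (SOME z. P i z)" for i
  have evP: "eventually (\<lambda>i. P i (\<xi> i)) F"
    using ev
  proof eventually_elim
    case (elim i)
    have "\<exists>z. P i z" unfolding P_def
      by (rule mvt_any) (rule d(2), use elim in auto)
    then show ?case unfolding \<xi>_def by (rule someI_ex)
  qed
  have "(\<xi> \<longlongrightarrow> a0) F"
  proof (rule tendsto_sandwich[of "\<lambda>i. min (u i) (v i)" _ _ "\<lambda>i. max (u i) (v i)"])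
    show "eventually (\<lambda>i. min (u i) (v i) \<le> \<xi> i) F" using evP by eventually_elim (simp add: P_def)
    show "eventually (\<lambda>i. \<xi> i \<le> max (u i) (v i)) F" using evP by eventually_elim (simp add: P_def)
    show "((\<lambda>i. min (u i) (v i)) \<longlongrightarrow> a0) F" using tendsto_min[OF u v] by simp
    show "((\<lambda>i. max (u i) (v i)) \<longlongrightarrow> a0) F" using tendsto_max[OF u v] by simp
  qed
  then have "((\<lambda>i. (\<xi> i, w i)) \<longlongrightarrow> (a0, b0)) F" using w by (rule tendsto_Pair)
  from isCont_tendsto_compose[OF cont this]
  have "((\<lambda>i. \<phi> (\<xi> i) (w i)) \<longlongrightarrow> \<phi> a0 b0) F" by simp
  moreover have "eventually (\<lambda>i. \<Phi> (u i) (w i) - \<Phi> (v i) (w i) = (u i - v i) * \<phi> (\<xi> i) (w i)) F"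
    using evP by eventually_elim (simp add: P_def)
  ultimately show ?thesis by blast
qed




lemma strict_inc_finite_exc:
  fixes f :: "real \<Rightarrow> real"
  assumes fin: "finite E" and cont: "\<And>s. isCont f s"
    and der: "\<And>s. s \<notin> E \<Longrightarrow> \<exists>d. DERIV f s :> d \<and> d > 0"
    and ab: "a < b"
  shows "f a < f b"
  using ab
proof (induction "card (E \<inter> {a<..<b})" arbitrary: a b rule: less_induct)
  case (less a b)
  show ?case
  proof (cases "E \<inter> {a<..<b} = {}")
    case True
    show ?thesis
    proof (rule DERIV_pos_imp_increasing_open[OF less.prems])
      fix s assume "a < s" "s < b"
      then have "s \<notin> E" using True by auto
      then show "\<exists>y. DERIV f s :> y \<and> y > 0" using der by blast
    next
      show "continuous_on {a..b} f" using cont by (simp add: continuous_at_imp_continuous_on)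
    qed
  next
    case False
    then obtain s where s: "s \<in> E" "a < s" "s < b" by auto
    have f1: "finite (E \<inter> {a<..<b})" using fin by simp
    have "E \<inter> {a<..<s} \<subset> E \<inter> {a<..<b}" using s by auto
    then have c1: "card (E \<inter> {a<..<s}) < card (E \<inter> {a<..<b})" using f1 by (simp add: psubset_card_mono)
    have "E \<inter> {s<..<b} \<subset> E \<inter> {a<..<b}" using s by auto
    then have c2: "card (E \<inter> {s<..<b}) < card (E \<inter> {a<..<b})" using f1 by (simp add: psubset_card_mono)
    have "f a < f s" using less.hyps[OF c1] s by simp
    also have "f s < f b" using less.hyps[OF c2] s by simp
    finally show ?thesis .
  qed
qed




locale L =
  fixes n :: nat and x :: "nat \<Rightarrow> real" and t :: real
  assumes n1: "n \<ge> 1" and tpos: "t > 0"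
begin

definition ok :: "real \<Rightarrow> real \<Rightarrow> bool" where "ok a b \<longleftrightarrow> \<not> (b = 0 \<and> (\<exists>j<n. a = x j))"
definition S where "S a b = (\<Sum>j<n. 1 / ((a - x j)^2 + b^2)) / real n"
definition y :: "real \<Rightarrow> real" where "y a = ymu n x t a"

lemma okD: "ok a b \<Longrightarrow> j < n \<Longrightarrow> (a - x j)^2 + b^2 > 0"
  by (auto simp: ok_def sum_power2_gt_zero_iff)

lemma ok_pos: "b \<noteq> 0 \<Longrightarrow> ok a b" by (simp add: ok_def)

lemma npos: "real n > 0" using n1 by simp
lemma nne: "{..<n} \<noteq> {}"
proof -
  have "0 \<in> {..<n}" using n1 by simp
  then show ?thesis by blast
qed

lemma S_cont_b: assumes "ok a b" shows "isCont (\<lambda>b. S a b) b"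
proof -
  have "\<forall>j<n. (a - x j)^2 + b^2 \<noteq> 0"
  proof (intro allI impI)
    fix j assume "j < n" from okD[OF assms this] show "(a - x j)^2 + b^2 \<noteq> 0" by linarith
  qed
  then show ?thesis unfolding S_def isCont_def using npos by (auto intro!: tendsto_intros)
qed

lemma S_cont_a: assumes "ok a b" shows "isCont (\<lambda>a. S a b) a"
proof -
  have "\<forall>j<n. (a - x j)^2 + b^2 \<noteq> 0"
  proof (intro allI impI)
    fix j assume "j < n" from okD[OF assms this] show "(a - x j)^2 + b^2 \<noteq> 0" by linarith
  qed
  then show ?thesis unfolding S_def isCont_def using npos by (auto intro!: tendsto_intros)
qed

lemma S_dec:
  assumes "0 \<le> b1" "b1 < b2" "ok a b1"
  shows "S a b2 < S a b1"
proof -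
  have "(\<Sum>j<n. 1 / ((a - x j)^2 + b2^2)) < (\<Sum>j<n. 1 / ((a - x j)^2 + b1^2))"
  proof (rule sum_strict_mono[OF finite_lessThan nne])
    fix j assume "j \<in> {..<n}"
    then have p: "(a - x j)^2 + b1^2 > 0" using okD assms by auto
    have "b1^2 < b2^2" using assms by (simp add: power_strict_mono)
    then show "1 / ((a - x j)^2 + b2^2) < 1 / ((a - x j)^2 + b1^2)"
      using p by (simp add: divide_strict_left_mono)
  qed
  then show ?thesis unfolding S_def using npos by (simp add: divide_strict_right_mono)
qed

lemma S_nonneg: "S a b \<ge> 0"
  unfolding S_def by (intro divide_nonneg_nonneg sum_nonneg) auto

lemma S_sqrt: "S a (sqrt t) \<le> 1 / t"
proof -
  have "(\<Sum>j<n. 1 / ((a - x j)^2 + (sqrt t)^2)) \<le> of_nat (card {..<n}) * (1 / t)"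
  proof (rule sum_bounded_above)
    fix j assume "j \<in> {..<n}"
    show "1 / ((a - x j)^2 + (sqrt t)^2) \<le> 1 / t"
      using tpos by (simp add: frac_le)
  qed
  then have "(\<Sum>j<n. 1 / ((a - x j)^2 + (sqrt t)^2)) / real n \<le> (real n * (1/t)) / real n"
    by (intro divide_right_mono) auto
  then show ?thesis unfolding S_def using npos by simp
qed

lemma y_eq: "y a = Inf {b. b > 0 \<and> S a b \<le> 1 / t}"
  by (simp add: y_def ymu_def S_def)

lemma Y_ne: "{b. b > 0 \<and> S a b \<le> 1 / t} \<noteq> {}"
proof -
  have "sqrt t \<in> {b. b > 0 \<and> S a b \<le> 1 / t}" using S_sqrt[of a] tpos by simp
  then show ?thesis by blast
qed

lemma Y_bdd: "bdd_below {b. b > 0 \<and> S a b \<le> 1 / t}"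
  by (rule bdd_belowI[of _ 0]) auto

lemma y_nonneg: "0 \<le> y a"
  unfolding y_eq by (rule cInf_greatest[OF Y_ne]) auto

lemma y_lower: "b > 0 \<Longrightarrow> S a b \<le> 1 / t \<Longrightarrow> y a \<le> b"
  unfolding y_eq by (rule cInf_lower[OF _ Y_bdd]) auto

lemma y_greatest: "(\<And>z. z > 0 \<Longrightarrow> S a z \<le> 1 / t \<Longrightarrow> b \<le> z) \<Longrightarrow> b \<le> y a"
  unfolding y_eq by (rule cInf_greatest[OF Y_ne]) auto

lemma y_lt:
  assumes b: "b > 0" and s: "S a b < 1 / t"
  shows "y a < b"
proof -
  have "((\<lambda>b. S a b) \<longlongrightarrow> S a b) (at b)" using S_cont_b[OF ok_pos, of b a] b
    by (simp add: isCont_def)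
  from order_tendstoD(2)[OF this s]
  obtain d where d: "d > 0" "\<And>z. z \<noteq> b \<Longrightarrow> dist z b < d \<Longrightarrow> S a z < 1 / t"
    unfolding eventually_at by auto
  define z where "z = max (b - d/2) (b/2)"
  have z: "z > 0" "z < b" "z \<noteq> b" "dist z b < d" using d b unfolding z_def by (auto simp: dist_real_def)
  have "S a z < 1 / t" using d(2)[OF z(3,4)] .
  then have "y a \<le> z" using y_lower z by simp
  then show ?thesis using z by simp
qed

lemma y_gt:
  assumes b: "b > 0" and s: "S a b > 1 / t"
  shows "y a > b"
proof -
  have "((\<lambda>b. S a b) \<longlongrightarrow> S a b) (at b)" using S_cont_b[OF ok_pos, of b a] b
    by (simp add: isCont_def)
  from order_tendstoD(1)[OF this s]
  obtain d where d: "d > 0" "\<And>z. z \<noteq> b \<Longrightarrow> dist z b < d \<Longrightarrow> S a z > 1 / t"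
    unfolding eventually_at by auto
  define z where "z = b + d/2"
  have z: "z > b" "z \<noteq> b" "dist z b < d" using d b unfolding z_def by (auto simp: dist_real_def)
  have sz: "S a z > 1 / t" using d z by auto
  have "z \<le> y a"
  proof (rule y_greatest)
    fix w assume w: "w > 0" "S a w \<le> 1 / t"
    show "z \<le> w"
    proof (rule ccontr)
      assume "\<not> z \<le> w"
      then have "S a z < S a w" using w by (intro S_dec) (auto intro: ok_pos)
      then show False using sz w by simp
    qed
  qed
  then show ?thesis using z by simp
qed

lemma y_eqb:
  assumes b: "b > 0" and s: "S a b = 1 / t"
  shows "y a = b"
proof (rule antisym)
  show "y a \<le> b" using y_lower b s by simp
  show "b \<le> y a"
  proof (rule y_greatest)
    fix w assume w: "w > 0" "S a w \<le> 1 / t"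
    show "b \<le> w"
    proof (rule ccontr)
      assume "\<not> b \<le> w"
      then have "S a b < S a w" using w by (intro S_dec) (auto intro: ok_pos)
      then show False using s w by simp
    qed
  qed
qed

lemma y_pos_S: "y a > 0 \<Longrightarrow> S a (y a) = 1 / t"
  using y_lt[of "y a" a] y_gt[of "y a" a] by (cases "S a (y a)" "1/t" rule: linorder_cases) auto

lemma y_lt_imp: "b > 0 \<Longrightarrow> y a < b \<Longrightarrow> S a b < 1 / t"
  using y_gt[of b a] y_eqb[of b a] by (cases "S a b" "1/t" rule: linorder_cases) auto

lemma y_gt_imp: "b > 0 \<Longrightarrow> b < y a \<Longrightarrow> S a b > 1 / t"
  using y_lt[of b a] y_eqb[of b a] by (cases "S a b" "1/t" rule: linorder_cases) auto

lemma y_zero_ok: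
  assumes "y a = 0" shows "ok a 0"
proof (rule ccontr)
  assume "\<not> ok a 0"
  then obtain j where j: "j < n" "a = x j" by (auto simp: ok_def)
  define b where "b = sqrt (t / (2 * real n))"
  have b: "b > 0" "b^2 = t / (2 * real n)" using tpos npos unfolding b_def by auto
  have "1 / ((a - x j)^2 + b^2) \<le> (\<Sum>j<n. 1 / ((a - x j)^2 + b^2))"
    by (rule member_le_sum) (use j in auto)
  moreover have "(a - x j)^2 + b^2 = b^2" using j by simp
  ultimately have t1: "1 / b^2 \<le> (\<Sum>j<n. 1 / ((a - x j)^2 + b^2))" by simp
  have "1 / b^2 / real n \<le> S a b" unfolding S_def by (rule divide_right_mono[OF t1]) simp
  moreover have "1 / b^2 / real n = 2 / t" using b npos tpos by (simp add: field_simps)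
  ultimately have "S a b > 1 / t" using tpos by (smt (verit, best) divide_strict_right_mono)
  then have "y a > b" using y_gt b by simp
  then show False using assms b by simp
qed

lemma ok_y: "ok a (y a)"
  using y_zero_ok[of a] ok_pos[of "y a" a] by (cases "y a = 0") auto

lemma y_zero_S:
  assumes "y a = 0" shows "S a 0 \<le> 1 / t"
proof (rule ccontr)
  assume "\<not> S a 0 \<le> 1 / t"
  then have s: "S a 0 > 1 / t" by simp
  have "((\<lambda>b. S a b) \<longlongrightarrow> S a 0) (at 0)" using S_cont_b[OF y_zero_ok[OF assms]]
    by (simp add: isCont_def)
  from order_tendstoD(1)[OF this s]
  obtain d where d: "d > 0" "\<And>z. z \<noteq> 0 \<Longrightarrow> dist z 0 < d \<Longrightarrow> S a z > 1 / t"
    unfolding eventually_at by auto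
  have "S a (d/2) > 1 / t" using d(2)[of "d/2"] d(1) by (simp add: dist_real_def)
  then have "y a > d/2" by (rule y_gt[rotated]) (use d in simp)
  then show False using assms d by simp
qed

lemma S0_imp_y0:
  assumes "ok a 0" "S a 0 \<le> 1 / t" shows "y a = 0"
proof (rule ccontr)
  assume "y a \<noteq> 0"
  then have p: "y a > 0" using y_nonneg[of a] by simp
  have "S a (y a) < S a 0" by (rule S_dec[OF order_refl p assms(1)])
  then have "S a (y a) < 1 / t" using assms by simp
  then have "y a < y a" using y_lt p by blast
  then show False by simp
qed

end



lemma dsum:
  assumes "\<And>j. j \<in> {..<n} \<Longrightarrow> ((\<lambda>s. f s j) has_real_derivative f' j) (at s0)"
  shows "((\<lambda>s. (\<Sum>j<n. f s j) / real n) has_real_derivative (\<Sum>j<n. f' j) / real n) (at s0)"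
  by (rule DERIV_cdivide[OF DERIV_sum]) (use assms in auto)

lemma t_inv_a: fixes b :: real assumes "(a-c)^2 + b^2 \<noteq> 0"
  shows "((\<lambda>s. 1 / ((s - c)^2 + b^2)) has_real_derivative -(2*(a - c))/((a-c)^2+b^2)^2) (at a)"
  apply (rule derivative_eq_intros refl | rule assms)+
  using assms apply (simp add: field_simps power2_eq_square)
  done

lemma t_inv_b: fixes b :: real assumes "u^2 + b^2 \<noteq> 0"
  shows "((\<lambda>b. 1 / (u^2 + b^2)) has_real_derivative -(2*b)/(u^2+b^2)^2) (at b)"
  apply (rule derivative_eq_intros refl | rule assms)+
  using assms apply (simp add: field_simps power2_eq_square)
  done

lemma t_rat_a: fixes b :: real assumes "(a-c)^2 + b^2 \<noteq> 0"
  shows "((\<lambda>s. (s - c) / ((s - c)^2 + b^2)) has_real_derivative (b^2 - (a-c)^2)/((a-c)^2+b^2)^2) (at a)"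
  apply (rule derivative_eq_intros refl | rule assms)+
  using assms apply (simp add: field_simps power2_eq_square)
  done

lemma t_rat_b: fixes b :: real assumes "u^2 + b^2 \<noteq> 0"
  shows "((\<lambda>b. u / (u^2 + b^2)) has_real_derivative -(2*u*b)/(u^2+b^2)^2) (at b)"
  apply (rule derivative_eq_intros refl | rule assms)+
  using assms apply (simp add: field_simps power2_eq_square)
  done

lemma t_ln_a: fixes b :: real assumes "(a-c)^2 + b^2 > 0"
  shows "((\<lambda>s. ln ((s - c)^2 + b^2)) has_real_derivative 2*(a-c)/((a-c)^2+b^2)) (at a)"
  apply (rule derivative_eq_intros refl | rule assms)+
  using assms apply (simp add: field_simps power2_eq_square)
  done

lemma t_ln_b: fixes b :: real assumes "u^2 + b^2 > 0"
  shows "((\<lambda>b. ln (u^2 + b^2)) has_real_derivative 2*b/(u^2+b^2)) (at b)"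
  apply (rule derivative_eq_intros refl | rule assms)+
  using assms apply (simp add: field_simps power2_eq_square)
  done

context L begin

definition R where "R a b = (\<Sum>j<n. (a - x j) / ((a - x j)^2 + b^2)) / real n"
definition Sa where "Sa a b = (\<Sum>j<n. -(2*(a - x j)) / ((a - x j)^2 + b^2)^2) / real n"
definition Sb where "Sb a b = (\<Sum>j<n. -(2*b) / ((a - x j)^2 + b^2)^2) / real n"
definition Ra where "Ra a b = (\<Sum>j<n. (b^2 - (a - x j)^2) / ((a - x j)^2 + b^2)^2) / real n"
definition Rb where "Rb a b = (\<Sum>j<n. -(2*(a - x j)*b) / ((a - x j)^2 + b^2)^2) / real n"
definition Gc where "Gc c a b = real n / (2 * t) * ((a - c)^2 - b^2) + (\<Sum>j<n. ln ((a - x j)^2 + b^2)) / 2"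
definition Ga where "Ga c a b = real n / t * (a - c) + (\<Sum>j<n. (a - x j) / ((a - x j)^2 + b^2))"

lemma okN: "ok a b \<Longrightarrow> j < n \<Longrightarrow> (a - x j)^2 + b^2 \<noteq> 0"
  using okD[of a b j] by linarith

lemma S_der_a: "ok a b \<Longrightarrow> ((\<lambda>a. S a b) has_real_derivative Sa a b) (at a)"
  unfolding S_def Sa_def by (rule dsum, rule t_inv_a, rule okN) auto

lemma S_der_b: "ok a b \<Longrightarrow> ((\<lambda>b. S a b) has_real_derivative Sb a b) (at b)"
  unfolding S_def Sb_def by (rule dsum, rule t_inv_b, rule okN) auto

lemma R_der_a: "ok a b \<Longrightarrow> ((\<lambda>a. R a b) has_real_derivative Ra a b) (at a)"
  unfolding R_def Ra_def by (rule dsum, rule t_rat_a, rule okN) auto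

lemma R_der_b: "ok a b \<Longrightarrow> ((\<lambda>b. R a b) has_real_derivative Rb a b) (at b)"
  unfolding R_def Rb_def by (rule dsum, rule t_rat_b, rule okN) auto

lemma G_der_a:
  assumes "ok a b"
  shows "((\<lambda>a. Gc c a b) has_real_derivative Ga c a b) (at a)"
proof -
  have "((\<lambda>a. (\<Sum>j<n. ln ((a - x j)^2 + b^2))) has_real_derivative (\<Sum>j<n. 2*(a - x j)/((a - x j)^2 + b^2))) (at a)"
    by (rule DERIV_sum, rule t_ln_a, rule okD[OF assms]) auto
  then have h: "((\<lambda>a. (\<Sum>j<n. ln ((a - x j)^2 + b^2)) / 2) has_real_derivative (\<Sum>j<n. 2*(a - x j)/((a - x j)^2 + b^2)) / 2) (at a)"
    by (rule DERIV_cdivide)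
  have q: "((\<lambda>a. real n / (2 * t) * ((a - c)^2 - b^2)) has_real_derivative real n / (2 * t) * (2 * (a - c))) (at a)"
    by (rule derivative_eq_intros refl)+ simp
  have e: "(\<Sum>j<n. 2*(a - x j)/((a - x j)^2 + b^2)) / 2 = (\<Sum>j<n. (a - x j)/((a - x j)^2 + b^2))"
  proof -
    have "(\<Sum>j<n. 2*(a - x j)/((a - x j)^2 + b^2)) = (\<Sum>j<n. 2 * ((a - x j)/((a - x j)^2 + b^2)))"
      by (rule sum.cong) auto
    also have "\<dots> = 2 * (\<Sum>j<n. (a - x j)/((a - x j)^2 + b^2))" by (simp only: sum_distrib_left)
    finally show ?thesis by simp
  qed
  have e2: "real n / (2 * t) * (2 * (a - c)) + (\<Sum>j<n. 2*(a - x j)/((a - x j)^2 + b^2)) / 2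
      = real n / t * (a - c) + (\<Sum>j<n. (a - x j) / ((a - x j)^2 + b^2))"
    using tpos by (simp only: e) (simp add: field_simps)
  show ?thesis unfolding Gc_def Ga_def
    by (rule DERIV_cong[OF DERIV_add[OF q h] e2])
qed

lemma G_der_b:
  assumes "ok a b"
  shows "((\<lambda>b. Gc c a b) has_real_derivative real n * b * (S a b - 1 / t)) (at b)"
proof -
  have "((\<lambda>b. (\<Sum>j<n. ln ((a - x j)^2 + b^2))) has_real_derivative (\<Sum>j<n. 2*b/((a - x j)^2 + b^2))) (at b)"
    by (rule DERIV_sum, rule t_ln_b, rule okD[OF assms]) auto
  then have h: "((\<lambda>b. (\<Sum>j<n. ln ((a - x j)^2 + b^2)) / 2) has_real_derivative (\<Sum>j<n. 2*b/((a - x j)^2 + b^2)) / 2) (at b)"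
    by (rule DERIV_cdivide)
  have q: "((\<lambda>b. real n / (2 * t) * ((a - c)^2 - b^2)) has_real_derivative real n / (2 * t) * (- (2 * b))) (at b)"
    by (rule derivative_eq_intros refl)+ simp
  have e: "(\<Sum>j<n. 2*b/((a - x j)^2 + b^2)) / 2 = b * (real n * S a b)"
  proof -
    have "(\<Sum>j<n. 2*b/((a - x j)^2 + b^2)) = (\<Sum>j<n. (2*b) * (1/((a - x j)^2 + b^2)))"
      by (rule sum.cong) auto
    also have "\<dots> = (2*b) * (\<Sum>j<n. 1/((a - x j)^2 + b^2))" by (simp only: sum_distrib_left)
    also have "(\<Sum>j<n. 1/((a - x j)^2 + b^2)) = real n * S a b" unfolding S_def using npos by simp
    finally show ?thesis by simp
  qed
  have e2: "real n / (2 * t) * (- (2 * b)) + b * (real n * S a b) = real n * b * (S a b - 1 / t)"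
    using tpos by (simp add: field_simps)
  show ?thesis unfolding Gc_def
    using DERIV_add[OF q h] by (simp only: e e2)
qed

end


lemma fst_lim: "(fst \<longlongrightarrow> a) (at (a, b))"
  using tendsto_fst[OF tendsto_ident_at[of "(a,b)" UNIV]] by (simp add: o_def)
lemma snd_lim: "(snd \<longlongrightarrow> b) (at (a, b))"
  using tendsto_snd[OF tendsto_ident_at[of "(a,b)" UNIV]] by (simp add: o_def)

context L begin

lemma nzall: "ok a b \<Longrightarrow> \<forall>j<n. (a - x j)^2 + b^2 \<noteq> 0" using okN by blast

lemma contJ_Ga: "ok a b \<Longrightarrow> isCont (\<lambda>p. Ga c (fst p) (snd p)) (a, b)"
  unfolding isCont_def Ga_def using nzall[of a b] tpos by (auto intro!: tendsto_intros fst_lim snd_lim)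

lemma contJ_R: "ok a b \<Longrightarrow> isCont (\<lambda>p. R (fst p) (snd p)) (a, b)"
  unfolding isCont_def R_def using nzall[of a b] npos by (auto intro!: tendsto_intros fst_lim snd_lim)

lemma contJ_Ra: "ok a b \<Longrightarrow> isCont (\<lambda>p. Ra (fst p) (snd p)) (a, b)"
  unfolding isCont_def Ra_def using nzall[of a b] npos by (auto intro!: tendsto_intros fst_lim snd_lim)

lemma contJ_Sa: "ok a b \<Longrightarrow> isCont (\<lambda>p. Sa (fst p) (snd p)) (a, b)"
  unfolding isCont_def Sa_def using nzall[of a b] npos by (auto intro!: tendsto_intros fst_lim snd_lim)

lemma contJ_Rb: "ok a b \<Longrightarrow> isCont (\<lambda>p. Rb (snd p) (fst p)) (b, a)"
  unfolding isCont_def Rb_def using nzall[of a b] npos by (auto intro!: tendsto_intros fst_lim snd_lim)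

lemma contJ_Sb: "ok a b \<Longrightarrow> isCont (\<lambda>p. Sb (snd p) (fst p)) (b, a)"
  unfolding isCont_def Sb_def using nzall[of a b] npos by (auto intro!: tendsto_intros fst_lim snd_lim)

lemma ok_near:
  assumes "ok a0 b0"
  shows "\<exists>d>0. \<forall>s b. \<bar>s - a0\<bar> < d \<and> \<bar>b - b0\<bar> < d \<longrightarrow> ok s b"
proof (cases "b0 = 0")
  case False
  then show ?thesis by (intro exI[of _ "\<bar>b0\<bar>"]) (auto simp: ok_def)
next
  case True
  have "a0 \<in> - (x ` {..<n})" using assms True by (auto simp: ok_def)
  moreover have "open (- (x ` {..<n}))" by (intro open_Compl finite_imp_closed) auto
  ultimately obtain d where d: "d > 0" "ball a0 d \<subseteq> - (x ` {..<n})"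
    using open_contains_ball by blast
  show ?thesis
  proof (intro exI[of _ d] conjI allI impI)
    fix s b assume "\<bar>s - a0\<bar> < d \<and> \<bar>b - b0\<bar> < d"
    then have "s \<in> ball a0 d" by (simp add: dist_real_def abs_minus_commute)
    then have "s \<notin> x ` {..<n}" using d by auto
    then show "ok s b" by (auto simp: ok_def)
  qed (use d in auto)
qed

lemma y_cont: "isCont y a0"
  unfolding isCont_def
proof (rule order_tendstoI)
  fix l assume l: "l > y a0"
  then have lp: "l > 0" using y_nonneg[of a0] by simp
  have "S a0 l < 1 / t" using y_lt_imp[OF lp l] .
  moreover have "((\<lambda>a. S a l) \<longlongrightarrow> S a0 l) (at a0)"
    using S_cont_a[OF ok_pos[of l a0]] lp by (simp add: isCont_def)
  ultimately have "eventually (\<lambda>a. S a l < 1 / t) (at a0)" by (rule order_tendstoD(2)[rotated])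
  then show "eventually (\<lambda>a. y a < l) (at a0)"
    by eventually_elim (rule y_lt[OF lp])
next
  fix l assume l: "l < y a0"
  show "eventually (\<lambda>a. l < y a) (at a0)"
  proof (cases "l < 0")
    case True
    then show ?thesis using y_nonneg by (auto intro: always_eventually less_le_trans)
  next
    case False
    define b where "b = max l (y a0 / 2)"
    have bp: "b > 0" "b < y a0" "l \<le> b" using l False unfolding b_def by auto
    have "S a0 b > 1 / t" using y_gt_imp[OF bp(1,2)] .
    moreover have "((\<lambda>a. S a b) \<longlongrightarrow> S a0 b) (at a0)"
      using S_cont_a[OF ok_pos[of b a0]] bp by (simp add: isCont_def)
    ultimately have "eventually (\<lambda>a. S a b > 1 / t) (at a0)" by (rule order_tendstoD(1)[rotated])
    then show ?thesis
      by eventually_elim (use y_gt[OF bp(1)] bp(3) in force)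
  qed
qed

lemma G_cont_b: "ok a b \<Longrightarrow> isCont (\<lambda>b. Gc c a b) b"
  using G_der_b by (rule DERIV_isCont)

lemma ok_of_y_le: "y a \<le> b \<Longrightarrow> ok a b"
  using ok_y[of a] ok_pos[of b a] y_nonneg[of a] by (cases "b = 0") auto

lemma G_up:
  assumes "0 \<le> b1" "b1 < b2" "b2 \<le> y a" "ok a b1"
  shows "Gc c a b1 < Gc c a b2"
proof (rule DERIV_pos_imp_increasing_open[OF assms(2)])
  fix s assume s: "b1 < s" "s < b2"
  then have sp: "s > 0" using assms by simp
  have "S a s > 1 / t" using y_gt_imp[OF sp] s assms by simp
  then have "real n * s * (S a s - 1 / t) > 0" using sp npos by simp
  then show "\<exists>d. ((\<lambda>b. Gc c a b) has_real_derivative d) (at s) \<and> d > 0"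
    using G_der_b[OF ok_pos[of s a]] sp by auto
next
  show "continuous_on {b1..b2} (\<lambda>b. Gc c a b)"
  proof (rule continuous_at_imp_continuous_on, rule ballI)
    fix s assume "s \<in> {b1..b2}"
    then have "ok a s" using assms ok_pos[of s a] by (cases "s = b1") auto
    then show "isCont (\<lambda>b. Gc c a b) s" by (rule G_cont_b)
  qed
qed

lemma G_down:
  assumes "y a \<le> b1" "b1 < b2"
  shows "Gc c a b2 < Gc c a b1"
proof (rule DERIV_neg_imp_decreasing_open[OF assms(2)])
  fix s assume s: "b1 < s" "s < b2"
  then have sp: "s > 0" using assms y_nonneg[of a] by simp
  have "S a s < 1 / t" using y_lt_imp[OF sp] s assms by simp
  then have "real n * s * (S a s - 1 / t) < 0" using sp npos by (simp add: mult_pos_neg)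
  then show "\<exists>d. ((\<lambda>b. Gc c a b) has_real_derivative d) (at s) \<and> d < 0"
    using G_der_b[OF ok_pos[of s a]] sp by auto
next
  show "continuous_on {b1..b2} (\<lambda>b. Gc c a b)"
  proof (rule continuous_at_imp_continuous_on, rule ballI)
    fix s assume "s \<in> {b1..b2}"
    then have "ok a s" using assms ok_of_y_le[of a s] by auto
    then show "isCont (\<lambda>b. Gc c a b) s" by (rule G_cont_b)
  qed
qed

lemma G_max: "0 \<le> b \<Longrightarrow> ok a b \<Longrightarrow> Gc c a b \<le> Gc c a (y a)"
  using G_up[of b "y a" a c] G_down[of a "y a" b c]
  by (cases b "y a" rule: linorder_cases) auto

definition hh where "hh c a b = (if ok a b then ereal (Gc c a b) else -\<infinity>)"

lemma h_up: "0 \<le> b1 \<Longrightarrow> b1 < b2 \<Longrightarrow> b2 \<le> y a \<Longrightarrow> hh c a b1 < hh c a b2"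
  using G_up[of b1 b2 a c] ok_pos[of b2 a] by (auto simp: hh_def)

lemma h_down: "y a \<le> b1 \<Longrightarrow> b1 < b2 \<Longrightarrow> hh c a b2 < hh c a b1"
  using G_down[of a b1 b2 c] ok_of_y_le[of a b1] ok_of_y_le[of a b2] by (auto simp: hh_def)

lemma h_le: "0 \<le> b \<Longrightarrow> hh c a b \<le> hh c a (y a)"
  using h_up[of b "y a" a c] h_down[of a "y a" b c]
  by (cases b "y a" rule: linorder_cases) auto

lemma part2:
  "is_local_max_on {0..} (hh c a) (y a)
   \<and> (\<forall>b. is_local_max_on {0..} (hh c a) b \<longrightarrow> b = y a)
   \<and> strict_mono_on {0<..<y a} (hh c a)
   \<and> strict_antimono_on {y a<..} (hh c a)"
proof (intro conjI allI impI)
  show "is_local_max_on {0..} (hh c a) (y a)"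
    unfolding is_local_max_on_def using y_nonneg[of a] h_le[of _ c a]
    by (auto intro!: exI[of _ 1])
next
  fix b assume "is_local_max_on {0..} (hh c a) b"
  then obtain e where b: "b \<ge> 0" "e > 0" "\<And>b'. b' \<ge> 0 \<Longrightarrow> \<bar>b' - b\<bar> < e \<Longrightarrow> hh c a b' \<le> hh c a b"
    unfolding is_local_max_on_def by auto
  show "b = y a"
  proof (rule ccontr)
    assume ne: "b \<noteq> y a"
    show False
    proof (cases "b < y a")
      case True
      define b' where "b' = min (b + e/2) (y a)"
      have "b < b'" "b' \<le> y a" "\<bar>b' - b\<bar> < e" using True b unfolding b'_def by auto
      then have "hh c a b < hh c a b'" "hh c a b' \<le> hh c a b" using h_up[of b b' a c] b by auto
      then show False by simp
    next
      case False
      then have gt: "y a < b" using ne by simp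
      define b' where "b' = max (b - e/2) (y a)"
      have "y a \<le> b'" "b' < b" "\<bar>b' - b\<bar> < e" using gt b unfolding b'_def by auto
      moreover have "b' \<ge> 0" using y_nonneg[of a] \<open>y a \<le> b'\<close> by simp
      ultimately have "hh c a b < hh c a b'" "hh c a b' \<le> hh c a b" using h_down[of a b' b c] b by auto
      then show False by simp
    qed
  qed
next
  show "strict_mono_on {0<..<y a} (hh c a)"
    by (rule strict_mono_onI) (auto intro: h_up)
next
  show "strict_antimono_on {y a<..} (hh c a)"
    by (rule monotone_onI) (auto intro: h_down)
qed

end



lemma sandwich_q:
  fixes d A m1 m2 :: real
  assumes "d \<noteq> 0" "d * m1 \<le> A" "A \<le> d * m2"
  shows "min m1 m2 \<le> A / d \<and> A / d \<le> max m1 m2"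
proof (cases "d > 0")
  case True
  then have "m1 \<le> A / d" "A / d \<le> m2" using assms by (simp_all add: pos_le_divide_eq pos_divide_le_eq mult.commute)
  then show ?thesis by linarith
next
  case False
  then have "d < 0" using assms by simp
  then have "A / d \<le> m1" "m2 \<le> A / d" using assms by (simp_all add: neg_le_divide_eq neg_divide_le_eq mult.commute)
  then show ?thesis by linarith
qed

context L begin

definition F where "F c a = Gc c a (y a)"
definition psi where "psi a = a + t * R a (y a)"

lemma Ga_psi: "Ga c a (y a) = real n / t * (psi a - c)"
proof -
  have "(\<Sum>j<n. (a - x j) / ((a - x j)^2 + (y a)^2)) = real n * R a (y a)"
    unfolding R_def using npos by simp
  then show ?thesis unfolding Ga_def psi_def using tpos by (simp add: field_simps)
qed

lemma y_tendsto: "(y \<longlongrightarrow> y a0) (at a0)"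
  using y_cont[of a0] by (simp add: isCont_def)

lemma F_der: "((\<lambda>a. F c a) has_real_derivative Ga c a0 (y a0)) (at a0)"
proof -
  define y0 where "y0 = y a0"
  have ok0: "ok a0 y0" unfolding y0_def by (rule ok_y)
  obtain d where d: "d > 0" "\<And>s b. \<bar>s - a0\<bar> < d \<Longrightarrow> \<bar>b - y0\<bar> < d \<Longrightarrow> ok s b"
    using ok_near[OF ok0] by blast
  have der: "\<exists>d>0. \<forall>s b. \<bar>s - a0\<bar> < d \<and> \<bar>b - y0\<bar> < d \<longrightarrow> ((\<lambda>s. Gc c s b) has_real_derivative Ga c s b) (at s)"
    using d G_der_a by blast
  have cont: "isCont (\<lambda>p. Ga c (fst p) (snd p)) (a0, y0)" by (rule contJ_Ga[OF ok0])
  have idl: "((\<lambda>a. a) \<longlongrightarrow> a0) (at a0)" by (rule tendsto_ident_at)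
  have cl: "((\<lambda>a. a0) \<longlongrightarrow> a0) (at a0)" by simp
  have cyl: "((\<lambda>a. y0) \<longlongrightarrow> y0) (at a0)" by simp
  have yl: "(y \<longlongrightarrow> y0) (at a0)" unfolding y0_def by (rule y_tendsto)
  obtain M1 where M1: "(M1 \<longlongrightarrow> Ga c a0 y0) (at a0)"
    "eventually (\<lambda>a. Gc c a y0 - Gc c a0 y0 = (a - a0) * M1 a) (at a0)"
    using hadamard[OF cont der idl cl cyl] by blast
  obtain M2 where M2: "(M2 \<longlongrightarrow> Ga c a0 y0) (at a0)"
    "eventually (\<lambda>a. Gc c a (y a) - Gc c a0 (y a) = (a - a0) * M2 a) (at a0)"
    using hadamard[OF cont der idl cl yl] by blast
  have ev1: "eventually (\<lambda>a. \<bar>a - a0\<bar> < d \<and> a \<noteq> a0) (at a0)"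
    using d(1) by (auto simp: eventually_at dist_real_def intro!: exI[of _ d])
  have ev2: "eventually (\<lambda>a. \<bar>y a - y0\<bar> < d) (at a0)"
    using tendstoD[OF yl d(1)] by (simp add: dist_real_def)
  have evq: "eventually (\<lambda>a. min (M1 a) (M2 a) \<le> (F c a - F c a0) / (a - a0) \<and>
      (F c a - F c a0) / (a - a0) \<le> max (M1 a) (M2 a)) (at a0)"
    using ev1 ev2 M1(2) M2(2)
  proof eventually_elim
    case (elim a)
    have oka: "ok a y0" using d(2) elim by simp
    have oka0: "ok a0 (y a)" using d(2) elim d(1) by simp
    have "Gc c a y0 \<le> F c a" unfolding F_def using G_max[OF _ oka] y_nonneg[of a0] y0_def by simp
    moreover have "Gc c a0 (y a) \<le> F c a0" unfolding F_def y0_def[symmetric]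
      using G_max[OF _ oka0] y_nonneg[of a] y0_def by simp
    moreover have "F c a0 = Gc c a0 y0" "F c a = Gc c a (y a)" unfolding F_def y0_def by simp_all
    ultimately have "(a - a0) * M1 a \<le> F c a - F c a0" "F c a - F c a0 \<le> (a - a0) * M2 a"
      using elim by linarith+
    then show ?case using sandwich_q[of "a - a0"] elim by simp
  qed
  have "((\<lambda>a. (F c a - F c a0) / (a - a0)) \<longlongrightarrow> Ga c a0 y0) (at a0)"
  proof (rule tendsto_sandwich[of "\<lambda>a. min (M1 a) (M2 a)" _ _ "\<lambda>a. max (M1 a) (M2 a)"])
    show "eventually (\<lambda>a. min (M1 a) (M2 a) \<le> (F c a - F c a0) / (a - a0)) (at a0)"
      using evq by eventually_elim simp
    show "eventually (\<lambda>a. (F c a - F c a0) / (a - a0) \<le> max (M1 a) (M2 a)) (at a0)"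
      using evq by eventually_elim simp
    show "((\<lambda>a. min (M1 a) (M2 a)) \<longlongrightarrow> Ga c a0 y0) (at a0)" using tendsto_min[OF M1(1) M2(1)] by simp
    show "((\<lambda>a. max (M1 a) (M2 a)) \<longlongrightarrow> Ga c a0 y0) (at a0)" using tendsto_max[OF M1(1) M2(1)] by simp
  qed
  then show ?thesis unfolding has_field_derivative_iff y0_def .
qed

lemma psi_cont: "isCont psi a0"
proof -
  have "((\<lambda>a. (a, y a)) \<longlongrightarrow> (a0, y a0)) (at a0)"
    by (intro tendsto_Pair tendsto_ident_at y_tendsto)
  from isCont_tendsto_compose[OF contJ_R[OF ok_y] this]
  have "((\<lambda>a. R a (y a)) \<longlongrightarrow> R a0 (y a0)) (at a0)" by simp
  then show ?thesis unfolding isCont_def psi_def by (intro tendsto_intros)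
qed

end


context L begin

lemma Ra_ge:
  assumes "ok a b"
  shows "Ra a b \<ge> - S a b" and "b \<noteq> 0 \<Longrightarrow> Ra a b > - S a b"
proof -
  have key: "(b^2 - (a - x j)^2) / ((a - x j)^2 + b^2)^2 = - (1 / ((a - x j)^2 + b^2)) + 2 * b^2 / ((a - x j)^2 + b^2)^2"
    if "j < n" for j
  proof -
    define D where "D = (a - x j)^2 + b^2"
    have Dn: "D \<noteq> 0" using okN[OF assms that] D_def by simp
    have "b^2 - (a - x j)^2 = 2 * b^2 - D" unfolding D_def by simp
    then have "(b^2 - (a - x j)^2) / D^2 = (2 * b^2 - D) / D^2" by simp
    also have "\<dots> = 2 * b^2 / D^2 - D / D^2" by (rule diff_divide_distrib)
    also have "D / D^2 = 1 / D" using Dn by (simp add: power2_eq_square)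
    finally show ?thesis unfolding D_def by simp
  qed
  have mS: "- S a b = (\<Sum>j<n. - (1 / ((a - x j)^2 + b^2))) / real n"
    unfolding S_def by (simp add: sum_negf)
  have "(\<Sum>j<n. - (1 / ((a - x j)^2 + b^2))) \<le> (\<Sum>j<n. (b^2 - (a - x j)^2) / ((a - x j)^2 + b^2)^2)"
    by (rule sum_mono) (simp add: key)
  then show "Ra a b \<ge> - S a b" unfolding mS Ra_def using npos by (simp add: divide_right_mono)
  assume b: "b \<noteq> 0"
  have "(\<Sum>j<n. - (1 / ((a - x j)^2 + b^2))) < (\<Sum>j<n. (b^2 - (a - x j)^2) / ((a - x j)^2 + b^2)^2)"
  proof (rule sum_strict_mono[OF finite_lessThan nne])
    fix j assume j: "j \<in> {..<n}"
    have "(a - x j)^2 + b^2 \<noteq> 0" using okN[OF assms] j by simp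
    then have "2 * b^2 / ((a - x j)^2 + b^2)^2 > 0" using b by simp
    then show "- (1 / ((a - x j)^2 + b^2)) < (b^2 - (a - x j)^2) / ((a - x j)^2 + b^2)^2"
      using key j by simp
  qed
  then show "Ra a b > - S a b" unfolding mS Ra_def using npos by (simp add: divide_strict_right_mono)
qed

lemma Sb_neg: "b > 0 \<Longrightarrow> Sb a b < 0"
proof -
  assume b: "b > 0"
  have "(\<Sum>j<n. -(2*b) / ((a - x j)^2 + b^2)^2) < (\<Sum>j<n. 0)"
  proof (rule sum_strict_mono[OF finite_lessThan nne])
    fix j assume j: "j \<in> {..<n}"
    have "(a - x j)^2 + b^2 > 0" using b by (simp add: sum_power2_gt_zero_iff)
    then show "-(2*b) / ((a - x j)^2 + b^2)^2 < 0" using b by (simp add: divide_neg_pos)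
  qed
  then show ?thesis unfolding Sb_def using npos by (simp add: divide_neg_pos)
qed

lemma Rb_eq: "Rb a b = b * Sa a b"
proof -
  have "(\<Sum>j<n. -(2*(a - x j)*b) / ((a - x j)^2 + b^2)^2) = (\<Sum>j<n. b * (-(2*(a - x j)) / ((a - x j)^2 + b^2)^2))"
    by (rule sum.cong) (auto simp: field_simps)
  also have "\<dots> = b * (\<Sum>j<n. -(2*(a - x j)) / ((a - x j)^2 + b^2)^2)" by (simp only: sum_distrib_left)
  finally show ?thesis unfolding Rb_def Sa_def by simp
qed

lemma at_ne: "eventually (\<lambda>a. a \<noteq> a0) (at a0)"
  by (simp add: eventually_at_filter)

lemma psi_der_U:
  assumes yp: "y a0 > 0"
  shows "\<exists>d. DERIV psi a0 :> d \<and> d > 0"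
proof -
  define y0 where "y0 = y a0"
  have y0p: "y0 > 0" using yp y0_def by simp
  have ok0: "ok a0 y0" using y0p by (simp add: ok_pos)
  obtain dd where dd: "dd > 0" "\<And>s b. \<bar>s - a0\<bar> < dd \<Longrightarrow> \<bar>b - y0\<bar> < dd \<Longrightarrow> ok s b"
    using ok_near[OF ok0] by blast
  have derS: "\<exists>d>0. \<forall>s b. \<bar>s - a0\<bar> < d \<and> \<bar>b - y0\<bar> < d \<longrightarrow> ((\<lambda>s. S s b) has_real_derivative Sa s b) (at s)"
    using dd S_der_a by blast
  have derR: "\<exists>d>0. \<forall>s b. \<bar>s - a0\<bar> < d \<and> \<bar>b - y0\<bar> < d \<longrightarrow> ((\<lambda>s. R s b) has_real_derivative Ra s b) (at s)"
    using dd R_der_a by blast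
  have derSb: "\<exists>d>0. \<forall>s b. \<bar>s - y0\<bar> < d \<and> \<bar>b - a0\<bar> < d \<longrightarrow> ((\<lambda>s. S b s) has_real_derivative Sb b s) (at s)"
    using dd S_der_b by blast
  have derRb: "\<exists>d>0. \<forall>s b. \<bar>s - y0\<bar> < d \<and> \<bar>b - a0\<bar> < d \<longrightarrow> ((\<lambda>s. R b s) has_real_derivative Rb b s) (at s)"
    using dd R_der_b by blast
  have idl: "((\<lambda>a. a) \<longlongrightarrow> a0) (at a0)" by (rule tendsto_ident_at)
  have cl: "((\<lambda>a. a0) \<longlongrightarrow> a0) (at a0)" by simp
  have cyl: "((\<lambda>a. y0) \<longlongrightarrow> y0) (at a0)" by simp
  have yl: "(y \<longlongrightarrow> y0) (at a0)" unfolding y0_def by (rule y_tendsto)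
  obtain N2 where N2: "(N2 \<longlongrightarrow> Sa a0 y0) (at a0)"
    "eventually (\<lambda>a. S a y0 - S a0 y0 = (a - a0) * N2 a) (at a0)"
    using hadamard[where \<Phi>=S and \<phi>=Sa, OF contJ_Sa[OF ok0] derS idl cl cyl] by blast
  obtain P2 where P2: "(P2 \<longlongrightarrow> Ra a0 y0) (at a0)"
    "eventually (\<lambda>a. R a y0 - R a0 y0 = (a - a0) * P2 a) (at a0)"
    using hadamard[where \<Phi>=R and \<phi>=Ra, OF contJ_Ra[OF ok0] derR idl cl cyl] by blast
  obtain N1 where N1: "(N1 \<longlongrightarrow> Sb a0 y0) (at a0)"
    "eventually (\<lambda>a. S a (y a) - S a y0 = (y a - y0) * N1 a) (at a0)"
    using hadamard[where \<Phi>="\<lambda>s b. S b s" and \<phi>="\<lambda>s b. Sb b s", OF contJ_Sb[OF ok0] derSb yl cyl idl] by blast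
  obtain P1 where P1: "(P1 \<longlongrightarrow> Rb a0 y0) (at a0)"
    "eventually (\<lambda>a. R a (y a) - R a y0 = (y a - y0) * P1 a) (at a0)"
    using hadamard[where \<Phi>="\<lambda>s b. R b s" and \<phi>="\<lambda>s b. Rb b s", OF contJ_Rb[OF ok0] derRb yl cyl idl] by blast
  have sb0: "Sb a0 y0 < 0" using Sb_neg[OF y0p] .
  have evy: "eventually (\<lambda>a. y a > 0) (at a0)" using order_tendstoD(1)[OF yl y0p] .
  have evN: "eventually (\<lambda>a. N1 a < 0) (at a0)" using order_tendstoD(2)[OF N1(1) sb0] .
  define D0 where "D0 = 1 + t * ((- Sa a0 y0 / Sb a0 y0) * Rb a0 y0 + Ra a0 y0)"
  have lim: "((\<lambda>a. 1 + t * ((- N2 a / N1 a) * P1 a + P2 a)) \<longlongrightarrow> D0) (at a0)"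
    unfolding D0_def using sb0 by (intro tendsto_intros N1(1) N2(1) P1(1) P2(1)) auto
  have evq: "eventually (\<lambda>a. (psi a - psi a0) / (a - a0) = 1 + t * ((- N2 a / N1 a) * P1 a + P2 a)) (at a0)"
    using at_ne[of a0] evy evN N1(2) N2(2) P1(2) P2(2)
  proof eventually_elim
    case (elim a)
    have "S a (y a) = 1 / t" using y_pos_S elim by simp
    moreover have "S a0 y0 = 1 / t" using y_pos_S y0p y0_def by simp
    ultimately have "(y a - y0) * N1 a = - ((a - a0) * N2 a)" using elim by simp
    then have ye0: "y a - y0 = (a - a0) * (- N2 a / N1 a)" using elim by (simp add: field_simps)
    define Q where "Q = - N2 a / N1 a"
    have ye: "y a - y0 = (a - a0) * Q" using ye0 Q_def by simp
    have "psi a - psi a0 = (a - a0) + t * ((R a (y a) - R a y0) + (R a y0 - R a0 y0))"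
      unfolding psi_def y0_def by (simp add: algebra_simps)
    also have "\<dots> = (a - a0) + t * ((y a - y0) * P1 a + (a - a0) * P2 a)"
      using elim by simp
    also have "\<dots> = (a - a0) + t * ((a - a0) * Q * P1 a + (a - a0) * P2 a)"
      by (simp only: ye)
    also have "\<dots> = (a - a0) * (1 + t * (Q * P1 a + P2 a))" by (simp add: algebra_simps)
    finally show ?case using elim Q_def by simp
  qed
  have "((\<lambda>a. (psi a - psi a0) / (a - a0)) \<longlongrightarrow> D0) (at a0)"
    using tendsto_cong[OF evq] lim by simp
  then have der: "DERIV psi a0 :> D0" unfolding has_field_derivative_iff .
  have "Ra a0 y0 > - S a0 y0" using Ra_ge(2)[OF ok0] y0p by simp
  then have r1: "1 + t * Ra a0 y0 > 0" using y_pos_S y0p y0_def tpos by (simp add: field_simps)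
  have "(- Sa a0 y0 / Sb a0 y0) * Rb a0 y0 = - (y0 * (Sa a0 y0)^2) / Sb a0 y0"
    by (simp add: Rb_eq power2_eq_square)
  also have "\<dots> \<ge> 0"
  proof -
    have "- (y0 * (Sa a0 y0)^2) \<le> 0" using y0p by simp
    then show ?thesis using divide_nonpos_neg[OF _ sb0] by blast
  qed
  finally have X: "0 \<le> (- Sa a0 y0 / Sb a0 y0) * Rb a0 y0" .
  have "t * ((- Sa a0 y0 / Sb a0 y0) * Rb a0 y0) \<ge> 0" using mult_nonneg_nonneg[OF less_imp_le[OF tpos] X] .
  then have "D0 > 0" unfolding D0_def using r1 by (simp add: algebra_simps)
  then show ?thesis using der by blast
qed

lemma psi_der_K:
  assumes y0: "y a0 = 0" and ok0: "ok a0 0" and s0: "S a0 0 < 1 / t"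
  shows "\<exists>d. DERIV psi a0 :> d \<and> d > 0"
proof -
  obtain dd where dd: "dd > 0" "\<And>s b. \<bar>s - a0\<bar> < dd \<Longrightarrow> \<bar>b - 0\<bar> < dd \<Longrightarrow> ok s b"
    using ok_near[OF ok0] by blast
  have derR: "\<exists>d>0. \<forall>s b. \<bar>s - a0\<bar> < d \<and> \<bar>b - 0\<bar> < d \<longrightarrow> ((\<lambda>s. R s b) has_real_derivative Ra s b) (at s)"
    using dd R_der_a by blast
  have idl: "((\<lambda>a. a) \<longlongrightarrow> a0) (at a0)" by (rule tendsto_ident_at)
  have cl: "((\<lambda>a. a0) \<longlongrightarrow> a0) (at a0)" by simp
  have c0: "((\<lambda>a. 0) \<longlongrightarrow> (0::real)) (at a0)" by simp
  obtain P where P: "(P \<longlongrightarrow> Ra a0 0) (at a0)"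
    "eventually (\<lambda>a. R a 0 - R a0 0 = (a - a0) * P a) (at a0)"
    using hadamard[where \<Phi>=R and \<phi>=Ra, OF contJ_Ra[OF ok0] derR idl cl c0] by blast
  have ev1: "eventually (\<lambda>a. \<bar>a - a0\<bar> < dd) (at a0)"
    using dd(1) by (auto simp: eventually_at dist_real_def intro!: exI[of _ dd])
  have "((\<lambda>a. S a 0) \<longlongrightarrow> S a0 0) (at a0)" using S_cont_a[OF ok0] by (simp add: isCont_def)
  then have ev2: "eventually (\<lambda>a. S a 0 < 1 / t) (at a0)" using s0 by (rule order_tendstoD(2))
  have evq: "eventually (\<lambda>a. (psi a - psi a0) / (a - a0) = 1 + t * P a) (at a0)"
    using at_ne[of a0] ev1 ev2 P(2)
  proof eventually_elim
    case (elim a)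
    have "ok a 0" using dd(2) elim dd(1) by simp
    then have "y a = 0" using S0_imp_y0 elim by simp
    then have "psi a - psi a0 = (a - a0) + t * (R a 0 - R a0 0)"
      unfolding psi_def using y0 by (simp add: algebra_simps)
    also have "\<dots> = (a - a0) + t * ((a - a0) * P a)" using elim by simp
    also have "\<dots> = (a - a0) * (1 + t * P a)" by (simp add: algebra_simps)
    finally have "psi a - psi a0 = (a - a0) * (1 + t * P a)" .
    then show ?case using elim by simp
  qed
  have "((\<lambda>a. (psi a - psi a0) / (a - a0)) \<longlongrightarrow> 1 + t * Ra a0 0) (at a0)"
    using tendsto_cong[OF evq] P(1) by (auto intro!: tendsto_intros)
  then have der: "DERIV psi a0 :> 1 + t * Ra a0 0" unfolding has_field_derivative_iff .
  have "Ra a0 0 \<ge> - S a0 0" using Ra_ge(1)[OF ok0] .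
  then have "t * (- S a0 0) \<le> t * Ra a0 0" using tpos by (intro mult_left_mono) auto
  then have "1 + t * Ra a0 0 \<ge> 1 - t * S a0 0" by simp
  moreover have "t * S a0 0 < 1" using s0 tpos by (simp add: field_simps)
  ultimately show ?thesis using der by (intro exI[of _ "1 + t * Ra a0 0"]) auto
qed

lemma psi_der: "\<not> (ok a0 0 \<and> S a0 0 = 1 / t) \<Longrightarrow> \<exists>d. DERIV psi a0 :> d \<and> d > 0"
proof (cases "y a0 > 0")
  case True then show ?thesis by (rule psi_der_U)
next
  case False
  assume ne: "\<not> (ok a0 0 \<and> S a0 0 = 1 / t)"
  have y0: "y a0 = 0" using False y_nonneg[of a0] by simp
  have ok0: "ok a0 0" using y_zero_ok[OF y0] .
  have "S a0 0 < 1 / t" using y_zero_S[OF y0] ne ok0 by simp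
  then show ?thesis using psi_der_K[OF y0 ok0] by simp
qed

end


context L begin

definition MM where "MM = (\<Sum>k<n. \<bar>x k\<bar>) + sqrt t + 1"

lemma far_sq:
  assumes "a \<ge> MM \<or> a \<le> - MM" "k < n"
  shows "(a - x k)^2 > t" "a \<noteq> x k" "a \<ge> MM \<Longrightarrow> a - x k > 0" "a \<le> - MM \<Longrightarrow> a - x k < 0"
proof -
  have xk: "\<bar>x k\<bar> \<le> (\<Sum>k<n. \<bar>x k\<bar>)" by (rule member_le_sum) (use assms in auto)
  have st: "sqrt t \<ge> 0" using tpos by simp
  have d: "\<bar>a - x k\<bar> \<ge> sqrt t + 1" using assms(1) xk st unfolding MM_def by auto
  have "(sqrt t + 1)^2 \<le> \<bar>a - x k\<bar>^2" by (rule power_mono[OF d]) (use st in simp)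
  moreover have "(sqrt t + 1)^2 = t + 2 * sqrt t + 1" using tpos by (simp add: power2_eq_square algebra_simps)
  ultimately have h1: "t + 2 * sqrt t + 1 \<le> (a - x k)^2" by (simp add: power2_abs)
  then show "(a - x k)^2 > t" using st by linarith
  show "a \<noteq> x k"
  proof
    assume "a = x k"
    then have "\<bar>a - x k\<bar> = 0" by simp
    with d st show False by linarith
  qed
  show "a \<ge> MM \<Longrightarrow> a - x k > 0" using xk st abs_ge_self[of "x k"] unfolding MM_def by linarith
  show "a \<le> - MM \<Longrightarrow> a - x k < 0" using xk st abs_ge_minus_self[of "x k"] unfolding MM_def by linarith
qed

lemma far_ok: "a \<ge> MM \<or> a \<le> - MM \<Longrightarrow> ok a 0"
  using far_sq(2) by (auto simp: ok_def)

lemma far_S: "a \<ge> MM \<or> a \<le> - MM \<Longrightarrow> S a 0 < 1 / t"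
proof -
  assume a: "a \<ge> MM \<or> a \<le> - MM"
  have "(\<Sum>k<n. 1 / ((a - x k)^2 + 0^2)) < (\<Sum>k<n. 1 / t)"
  proof (rule sum_strict_mono[OF finite_lessThan nne])
    fix k assume "k \<in> {..<n}"
    then have "(a - x k)^2 > t" using far_sq(1)[OF a] by simp
    then show "1 / ((a - x k)^2 + 0^2) < 1 / t" using tpos by (simp add: frac_less2)
  qed
  then have "(\<Sum>k<n. 1 / ((a - x k)^2 + 0^2)) < real n * (1 / t)" by simp
  then have "(\<Sum>k<n. 1 / ((a - x k)^2 + 0^2)) / real n < (real n * (1 / t)) / real n"
    by (rule divide_strict_right_mono) (use npos in simp)
  then show ?thesis unfolding S_def using npos by simp
qed

lemma far_y: "a \<ge> MM \<or> a \<le> - MM \<Longrightarrow> y a = 0"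
  using S0_imp_y0 far_ok far_S by (simp add: less_imp_le)

lemma psi_far_pos: assumes "a \<ge> MM" shows "psi a > a"
proof -
  have "(\<Sum>k<n. (a - x k) / ((a - x k)^2 + 0^2)) > 0"
  proof (rule sum_pos[OF finite_lessThan nne])
    fix k assume "k \<in> {..<n}"
    then have "a - x k > 0" using far_sq(3)[of a k] assms by simp
    then show "(a - x k) / ((a - x k)^2 + 0^2) > 0" by simp
  qed
  then have "R a 0 > 0" unfolding R_def using npos by simp
  then show ?thesis unfolding psi_def using far_y[of a] assms tpos by simp
qed

lemma psi_far_neg: assumes "a \<le> - MM" shows "psi a < a"
proof -
  have "(\<Sum>k<n. (a - x k) / ((a - x k)^2 + 0^2)) < (\<Sum>k<n. 0)"
  proof (rule sum_strict_mono[OF finite_lessThan nne])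
    fix k assume "k \<in> {..<n}"
    then have "a - x k < 0" using far_sq(4)[of a k] assms by simp
    then show "(a - x k) / ((a - x k)^2 + 0^2) < 0" by (simp add: divide_neg_pos)
  qed
  then have "R a 0 < 0" unfolding R_def using npos by (simp add: divide_neg_pos)
  then show ?thesis unfolding psi_def using far_y[of a] assms tpos by (simp add: mult_pos_neg)
qed

lemma E_fin: "finite {a. ok a 0 \<and> S a 0 = 1 / t}"
proof -
  define q where "q k = [:- x k, 1:]^2" for k
  define p where "p = smult (real n) (\<Prod>k<n. q k) - smult t (\<Sum>j<n. \<Prod>k\<in>{..<n}-{j}. q k)"
  have pq: "poly (q k) a = (a - x k)^2" for k a by (simp add: q_def)
  have pe: "poly p a = real n * (\<Prod>k<n. (a - x k)^2) * (1 - t * S a 0)" if oka: "ok a 0" for a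
  proof -
    define P where "P = (\<Prod>k<n. (a - x k)^2)"
    have nz: "(a - x j)^2 \<noteq> 0" if "j < n" for j using okN[OF oka that] by simp
    have pr: "(\<Prod>k\<in>{..<n}-{j}. (a - x k)^2) = P * (1 / ((a - x j)^2 + 0^2))" if j: "j < n" for j
    proof -
      have "P = (a - x j)^2 * (\<Prod>k\<in>{..<n}-{j}. (a - x k)^2)"
        unfolding P_def using j by (simp add: prod.remove)
      then show ?thesis using nz[OF j] by (simp add: field_simps)
    qed
    have "poly p a = real n * P - t * (\<Sum>j<n. \<Prod>k\<in>{..<n}-{j}. (a - x k)^2)"
      unfolding p_def P_def by (simp add: poly_prod poly_sum pq)
    also have "(\<Sum>j<n. \<Prod>k\<in>{..<n}-{j}. (a - x k)^2) = (\<Sum>j<n. P * (1 / ((a - x j)^2 + 0^2)))"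
      by (rule sum.cong) (auto simp: pr)
    also have "\<dots> = P * (\<Sum>j<n. 1 / ((a - x j)^2 + 0^2))" by (rule sum_distrib_left[symmetric])
    also have "(\<Sum>j<n. 1 / ((a - x j)^2 + 0^2)) = real n * S a 0" unfolding S_def using npos by simp
    finally show ?thesis unfolding P_def[symmetric] by (simp add: algebra_simps)
  qed
  have "p \<noteq> 0"
  proof
    assume p0: "p = 0"
    have a1: "MM \<ge> MM \<or> MM \<le> - MM" by simp
    have "(\<Prod>k<n. (MM - x k)^2) \<noteq> 0" using far_sq(2)[OF a1] by (simp add: prod_zero_iff)
    moreover have "1 - t * S MM 0 \<noteq> 0" using far_S[OF a1] tpos by (simp add: field_simps)
    ultimately have "poly p MM \<noteq> 0" using pe[OF far_ok[OF a1]] npos by simp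
    then show False using p0 by simp
  qed
  have "{a. ok a 0 \<and> S a 0 = 1 / t} \<subseteq> {a. poly p a = 0}"
    using pe tpos by auto
  then show ?thesis using poly_roots_finite[OF \<open>p \<noteq> 0\<close>] by (rule finite_subset)
qed

lemma psi_mono: "a < b \<Longrightarrow> psi a < psi b"
  by (rule strict_inc_finite_exc[OF E_fin psi_cont]) (use psi_der in auto)

lemma psi_surj: "\<exists>a. psi a = c"
proof -
  define a1 where "a1 = min c (- MM)"
  define a2 where "a2 = max c MM"
  have "psi a1 < a1" using psi_far_neg[of a1] unfolding a1_def by simp
  then have l: "psi a1 \<le> c" unfolding a1_def by simp
  have "psi a2 > a2" using psi_far_pos[of a2] unfolding a2_def by simp
  then have u: "c \<le> psi a2" unfolding a2_def by simp
  have "a1 \<le> a2" unfolding a1_def a2_def by simp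
  moreover have "continuous_on {a1..a2} psi" using psi_cont by (simp add: continuous_at_imp_continuous_on)
  ultimately show ?thesis using IVT'[of psi a1 c a2] l u by blast
qed

end


context L begin

lemma F_cont: "isCont (\<lambda>a. F c a) a" using F_der by (rule DERIV_isCont)

lemma F_dec:
  assumes "a1 < a2" "a2 \<le> as" "psi as = c"
  shows "F c a2 < F c a1"
proof (rule DERIV_neg_imp_decreasing_open[OF assms(1)])
  fix s assume s: "a1 < s" "s < a2"
  then have "psi s < c" using psi_mono[of s as] assms by simp
  then have "real n * (psi s - c) < 0" using npos by (intro mult_pos_neg) auto
  then have "real n * (psi s - c) / t < 0" using tpos by (rule divide_neg_pos)
  then have "Ga c s (y s) < 0" unfolding Ga_psi by simp
  then show "\<exists>d. ((\<lambda>a. F c a) has_real_derivative d) (at s) \<and> d < 0" using F_der by blast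
next
  show "continuous_on {a1..a2} (\<lambda>a. F c a)" using F_cont by (simp add: continuous_at_imp_continuous_on)
qed

lemma F_inc:
  assumes "as \<le> a1" "a1 < a2" "psi as = c"
  shows "F c a1 < F c a2"
proof (rule DERIV_pos_imp_increasing_open[OF assms(2)])
  fix s assume s: "a1 < s" "s < a2"
  then have "psi s > c" using psi_mono[of as s] assms by simp
  then have "Ga c s (y s) > 0" unfolding Ga_psi using npos tpos by simp
  then show "\<exists>d. ((\<lambda>a. F c a) has_real_derivative d) (at s) \<and> d > 0" using F_der by blast
next
  show "continuous_on {a1..a2} (\<lambda>a. F c a)" using F_cont by (simp add: continuous_at_imp_continuous_on)
qed

lemma F_le: "psi as = c \<Longrightarrow> F c as \<le> F c a"
  using F_dec[of a as as c] F_inc[of as as a c] by (cases a as rule: linorder_cases) auto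

lemma part1:
  assumes ps: "psi as = c"
  shows "is_local_min_on UNIV (\<lambda>a. ereal (F c a)) as
   \<and> (\<forall>a. is_local_min_on UNIV (\<lambda>a. ereal (F c a)) a \<longrightarrow> a = as)
   \<and> strict_antimono_on {..<as} (\<lambda>a. ereal (F c a))
   \<and> strict_mono_on {as<..} (\<lambda>a. ereal (F c a))"
proof (intro conjI allI impI)
  show "is_local_min_on UNIV (\<lambda>a. ereal (F c a)) as"
    unfolding is_local_min_on_def using F_le[OF ps] by (auto intro!: exI[of _ 1])
next
  fix a assume "is_local_min_on UNIV (\<lambda>a. ereal (F c a)) a"
  then obtain e where e: "e > 0" "\<And>b. \<bar>b - a\<bar> < e \<Longrightarrow> F c a \<le> F c b"
    unfolding is_local_min_on_def by auto
  show "a = as"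
  proof (rule ccontr)
    assume ne: "a \<noteq> as"
    show False
    proof (cases "a < as")
      case True
      define b where "b = min (a + e/2) as"
      have "a < b" "b \<le> as" "\<bar>b - a\<bar> < e" using True e unfolding b_def by auto
      then have "F c b < F c a" "F c a \<le> F c b" using F_dec[OF _ _ ps, of a b] e by auto
      then show False by simp
    next
      case False
      then have gt: "as < a" using ne by simp
      define b where "b = max (a - e/2) as"
      have "as \<le> b" "b < a" "\<bar>b - a\<bar> < e" using gt e unfolding b_def by auto
      then have "F c b < F c a" "F c a \<le> F c b" using F_inc[OF _ _ ps, of b a] e by auto
      then show False by simp
    qed
  qed
next
  show "strict_antimono_on {..<as} (\<lambda>a. ereal (F c a))"
    by (rule monotone_onI) (use F_dec[OF _ _ ps] in auto)
next
  show "strict_mono_on {as<..} (\<lambda>a. ereal (F c a))"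
    by (rule strict_mono_onI) (use F_inc[OF _ _ ps] in auto)
qed

lemma inv_cx: "u^2 + b^2 \<noteq> 0 \<Longrightarrow> 1 / Complex u b = Complex (u / (u^2 + b^2)) (- b / (u^2 + b^2))"
  by (simp add: complex_eq_iff Re_divide Im_divide power2_eq_square)

lemma H_curve: "Hmu n x t (Complex a (y a)) = complex_of_real (psi a)"
proof -
  define b where "b = y a"
  have ok: "ok a b" unfolding b_def by (rule ok_y)
  have e: "Complex a b - complex_of_real (x j) = Complex (a - x j) b" for j by (simp add: complex_eq_iff)
  have sum: "(\<Sum>j<n. 1 / (Complex a b - complex_of_real (x j))) =
      (\<Sum>j<n. Complex ((a - x j) / ((a - x j)^2 + b^2)) (- b / ((a - x j)^2 + b^2)))"
  proof (rule sum.cong[OF refl])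
    fix j assume "j \<in> {..<n}"
    then have j: "j < n" by simp
    show "1 / (Complex a b - complex_of_real (x j)) = Complex ((a - x j) / ((a - x j)^2 + b^2)) (- b / ((a - x j)^2 + b^2))"
      unfolding e by (rule inv_cx[OF okN[OF ok j]])
  qed
  have re: "Re (\<Sum>j<n. 1 / (Complex a b - complex_of_real (x j))) = real n * R a b"
    unfolding sum Re_sum R_def using npos by simp
  have "Im (\<Sum>j<n. 1 / (Complex a b - complex_of_real (x j))) = (\<Sum>j<n. - b / ((a - x j)^2 + b^2))"
    unfolding sum Im_sum by simp
  also have "\<dots> = - b * (\<Sum>j<n. 1 / ((a - x j)^2 + b^2))"
    by (simp add: sum_distrib_left sum_negf)
  also have "\<dots> = - b * (real n * S a b)" unfolding S_def using npos by simp
  finally have im: "Im (\<Sum>j<n. 1 / (Complex a b - complex_of_real (x j))) = - b * (real n * S a b)" .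
  have "b * (1 - t * S a b) = 0"
  proof (cases "b > 0")
    case True then have "S a b = 1 / t" using y_pos_S b_def by simp
    then show ?thesis using tpos by simp
  next
    case False then have "b = 0" using y_nonneg[of a] b_def by simp
    then show ?thesis by simp
  qed
  then have im0: "b - t * (b * S a b) = 0" by (simp add: algebra_simps)
  show ?thesis unfolding b_def[symmetric] Hmu_def Gmu_def psi_def
    using re im npos im0 by (simp add: complex_eq_iff)
qed

lemma Fmu_eq:
  assumes ps: "psi as = c"
  shows "Fmu n x t c = Complex as (y as)"
  unfolding Fmu_def
proof (rule the_equality)
  show "Complex as (y as) \<in> ycurve n x t \<and> Hmu n x t (Complex as (y as)) = complex_of_real c"
    unfolding ycurve_def y_def[symmetric] using H_curve ps by auto
next
  fix z assume z: "z \<in> ycurve n x t \<and> Hmu n x t z = complex_of_real c"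
  then obtain a where a: "z = Complex a (y a)" unfolding ycurve_def y_def by auto
  then have "psi a = c" using z H_curve by simp
  then have "a = as" using psi_mono[of a as] psi_mono[of as a] ps by (cases a as rule: linorder_cases) auto
  then show "z = Complex as (y as)" using a by simp
qed

end



theorem lemma3p3:
  fixes n :: nat and x :: "nat \<Rightarrow> real"
    and tcr c2 G0 xstar \<tau> u v :: real
  assumes "n \<ge> 1" and "tcr > 0" and "c2 > 0"
    and "tn tcr c2 n \<tau> > 0"
  shows
   "(let t = tn tcr c2 n \<tau>;
         w = Fmu n x t (xn xstar G0 tcr c2 n \<tau> + u / (c2 * real n powr (2/3)));
         f = (\<lambda>a. RePhi n x tcr c2 G0 xstar \<tau> (Complex a (ymu n x t a)) u)
     in is_local_min_on UNIV f (Re w)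
        \<and> (\<forall>a. is_local_min_on UNIV f a \<longrightarrow> a = Re w)
        \<and> strict_antimono_on {..<Re w} f
        \<and> strict_mono_on {Re w<..} f)
    \<and> (\<forall>a. let t = tn tcr c2 n \<tau>;
              h = (\<lambda>b. RePhi n x tcr c2 G0 xstar \<tau> (Complex a b) v)
          in is_local_max_on {0..} h (ymu n x t a)
             \<and> (\<forall>b. is_local_max_on {0..} h b \<longrightarrow> b = ymu n x t a)
             \<and> strict_mono_on {0<..<ymu n x t a} h
             \<and> strict_antimono_on {ymu n x t a<..} h)"
proof -
  define T where "T = tn tcr c2 n \<tau>"
  interpret L n x T using assms T_def by unfold_locales auto
  define Cu where "Cu = xn xstar G0 tcr c2 n \<tau> + u / (c2 * real n powr (2/3))"
  define Cv where "Cv = xn xstar G0 tcr c2 n \<tau> + v / (c2 * real n powr (2/3))"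
  obtain as where ps: "psi as = Cu" using psi_surj by blast
  have f_eq: "(\<lambda>a. RePhi n x tcr c2 G0 xstar \<tau> (Complex a (y a)) u) = (\<lambda>a. ereal (F Cu a))"
  proof (rule ext)
    fix a
    have "ok a (y a)" by (rule ok_y)
    then show "RePhi n x tcr c2 G0 xstar \<tau> (Complex a (y a)) u = ereal (F Cu a)"
      unfolding RePhi_eq F_def Gc_def T_def[symmetric] Cu_def[symmetric] y_def[symmetric]
      by (simp add: ok_def)
  qed
  have h_eq: "(\<lambda>b. RePhi n x tcr c2 G0 xstar \<tau> (Complex a b) v) = hh Cv a" for a
  proof (rule ext)
    fix b
    show "RePhi n x tcr c2 G0 xstar \<tau> (Complex a b) v = hh Cv a b"
      unfolding RePhi_eq hh_def Gc_def T_def[symmetric] Cv_def[symmetric] ok_def by simp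
  qed
  have w: "Fmu n x T Cu = Complex as (y as)" by (rule Fmu_eq[OF ps])
  have P1: "is_local_min_on UNIV (\<lambda>a. ereal (F Cu a)) as
   \<and> (\<forall>a. is_local_min_on UNIV (\<lambda>a. ereal (F Cu a)) a \<longrightarrow> a = as)
   \<and> strict_antimono_on {..<as} (\<lambda>a. ereal (F Cu a))
   \<and> strict_mono_on {as<..} (\<lambda>a. ereal (F Cu a))" by (rule part1[OF ps])
  have P2: "\<forall>a. is_local_max_on {0..} (hh Cv a) (y a)
   \<and> (\<forall>b. is_local_max_on {0..} (hh Cv a) b \<longrightarrow> b = y a)
   \<and> strict_mono_on {0<..<y a} (hh Cv a)
   \<and> strict_antimono_on {y a<..} (hh Cv a)" using part2 by blast
  show ?thesis
    unfolding Let_def T_def[symmetric] Cu_def[symmetric] y_def[symmetric]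
    unfolding f_eq w h_eq
    using P1 P2 by simp
qed



end
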